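(* Let $\mathcal{R}$ be the hyperfinite $II_1$ factor with normalized trace $\tau$, realized as the weak closure of the increasing union $\bigcup_{j\ge0} M_{2^j}(\mathbb{C})$, and let $P_n$ be the orthogonal projection of $L^2(\mathcal{R},\tau)$ onto $M_{2^n}(\mathbb{C})$. Let $(\mathcal{E},D(\mathcal{E}))$ be a Dirichlet form on $L^2(\mathcal{R},\tau)$ with $D(\mathcal{E})\supseteq\bigcup_{j\ge0}M_{2^j}(\mathbb{C})$, and set $\mathcal{E}_n(a)=\mathcal{E}(P_na)$. If $\lim_{n\to\infty}\mathcal{E}_n(a)=\mathcal{E}(a)$ for all $a\in D(\mathcal{E})$, then $\bigcup_{j\ge0}M_{2^j}(\mathbb{C})$ is a form core for $\mathcal{E}$, i.e. it is dense in $D(\mathcal{E})$ with respect to the norm $\|a\|_1=(\mathcal{E}(a)+\|a\|_2^2)^{1/2}$.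
   Context: $M_{2^n}(\mathbb{C})$ is embedded in $M_{2^{n+1}}(\mathbb{C})$ via $a\mapsto \mathrm{diag}(a,a)$. $L^2(\mathcal{R},\tau)$ is the completion of $\mathcal{R}$ in $\|a\|_2=\tau(a^*a)^{1/2}$; $J$ is the antilinear isometry extending $a\mapsto a^*$; $L^2_+$ is the closure of the positive elements; for real ($J$-invariant) $a$, $a\wedge1$ is the Hilbert projection of $a$ onto the $L^2$-closure of $\{b\in L^2_+: b\le 1\}$. A Dirichlet form is a closed, densely defined, nonnegative quadratic form on $L^2(\mathcal{R},\tau)$ that is real ($D(\mathcal{E})$ is $J$-invariant and $\mathcal{E}(Ja)=\mathcal{E}(a)$) and satisfies $\mathcal{E}(a\wedge1)\le\mathcal{E}(a)$ for real $a\in D(\mathcal{E})$. *)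

theory Defs
  imports "HOL-Analysis.Analysis" "Jordan_Normal_Form.Schur_Decomposition"
begin

definition ntrace :: "nat \<Rightarrow> complex mat \<Rightarrow> complex" where
  "ntrace n A = (\<Sum>i<2^n. A $$ (i,i)) / of_nat (2^n)"

text \<open>The embedding M_{2^n} into M_{2^(n+1)}, a \<mapsto> diag(a,a).\<close>
definition diag2 :: "nat \<Rightarrow> complex mat \<Rightarrow> complex mat" where
  "diag2 n A = four_block_mat A (0\<^sub>m (2^n) (2^n)) (0\<^sub>m (2^n) (2^n)) A"

definition pos_mats :: "nat \<Rightarrow> complex mat set" where
  "pos_mats n = {mat_adjoint B * B | B. B \<in> carrier_mat (2^n) (2^n)}"

text \<open>The complex Hilbert space structure: a real Hilbert space with a complex
  scalar multiplication cm extending the real one, with norm (cm c x) = |c| norm x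
  (this determines the complex inner product by polarization).\<close>
definition complex_structure :: "(complex \<Rightarrow> 'h::{real_inner,complete_space} \<Rightarrow> 'h) \<Rightarrow> bool" where
  "complex_structure cm \<longleftrightarrow>
     (\<forall>r x. cm (complex_of_real r) x = r *\<^sub>R x) \<and>
     (\<forall>c x y. cm c (x + y) = cm c x + cm c y) \<and>
     (\<forall>c d x. cm (c + d) x = cm c x + cm d x) \<and>
     (\<forall>c d x. cm (c * d) x = cm c (cm d x)) \<and>
     (\<forall>c x. norm (cm c x) = cmod c * norm x)"

text \<open>iota n is the inclusion of M_{2^n}(C) into L^2(R,tau): complex linear,
  isometric for the norm tau(a* a)^(1/2), compatible with a \<mapsto> diag(a,a),
  and the union of the images is dense (L^2 is the completion of the union).\<close>
definition L2_realization ::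
  "(complex \<Rightarrow> 'h::{real_inner,complete_space} \<Rightarrow> 'h) \<Rightarrow> (nat \<Rightarrow> complex mat \<Rightarrow> 'h) \<Rightarrow> bool" where
  "L2_realization cm \<iota> \<longleftrightarrow>
     complex_structure cm \<and>
     (\<forall>n A B. A \<in> carrier_mat (2^n) (2^n) \<longrightarrow> B \<in> carrier_mat (2^n) (2^n) \<longrightarrow>
        \<iota> n (A + B) = \<iota> n A + \<iota> n B) \<and>
     (\<forall>n c A. A \<in> carrier_mat (2^n) (2^n) \<longrightarrow> \<iota> n (c \<cdot>\<^sub>m A) = cm c (\<iota> n A)) \<and>
     (\<forall>n A. A \<in> carrier_mat (2^n) (2^n) \<longrightarrow>
        norm (\<iota> n A) = sqrt (Re (ntrace n (mat_adjoint A * A)))) \<and>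
     (\<forall>n A. A \<in> carrier_mat (2^n) (2^n) \<longrightarrow> \<iota> (Suc n) (diag2 n A) = \<iota> n A) \<and>
     closure (\<Union>n. \<iota> n ` carrier_mat (2^n) (2^n)) = UNIV"

definition union_alg :: "(nat \<Rightarrow> complex mat \<Rightarrow> 'h) \<Rightarrow> 'h set" where
  "union_alg \<iota> = (\<Union>n. \<iota> n ` carrier_mat (2^n) (2^n))"

definition is_J :: "(nat \<Rightarrow> complex mat \<Rightarrow> 'h::real_normed_vector) \<Rightarrow> ('h \<Rightarrow> 'h) \<Rightarrow> bool" where
  "is_J \<iota> J \<longleftrightarrow> (\<forall>x y. norm (J x - J y) = norm (x - y)) \<and>
     (\<forall>n A. A \<in> carrier_mat (2^n) (2^n) \<longrightarrow> J (\<iota> n A) = \<iota> n (mat_adjoint A))"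

definition L2_pos :: "(nat \<Rightarrow> complex mat \<Rightarrow> 'h::topological_space) \<Rightarrow> 'h set" where
  "L2_pos \<iota> = closure (\<Union>n. \<iota> n ` pos_mats n)"

definition hproj :: "'h::real_inner set \<Rightarrow> 'h \<Rightarrow> 'h" where
  "hproj C a = (SOME b. b \<in> C \<and> (\<forall>c\<in>C. dist a b \<le> dist a c))"

definition unit_L2 :: "(nat \<Rightarrow> complex mat \<Rightarrow> 'h) \<Rightarrow> 'h" where
  "unit_L2 \<iota> = \<iota> 0 (1\<^sub>m 1)"

text \<open>a \<and> 1: projection onto the L^2-closure of {b \<in> L^2_+ : b \<le> 1},
  where b \<le> 1 means 1 - b \<in> L^2_+.\<close>
definition wedge1 :: "(nat \<Rightarrow> complex mat \<Rightarrow> 'h::real_inner) \<Rightarrow> 'h \<Rightarrow> 'h" where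
  "wedge1 \<iota> a = hproj (closure {b \<in> L2_pos \<iota>. unit_L2 \<iota> - b \<in> L2_pos \<iota>}) a"

definition Pn :: "(nat \<Rightarrow> complex mat \<Rightarrow> 'h::real_inner) \<Rightarrow> nat \<Rightarrow> 'h \<Rightarrow> 'h" where
  "Pn \<iota> n a = hproj (\<iota> n ` carrier_mat (2^n) (2^n)) a"

definition form_norm :: "('h::real_normed_vector \<Rightarrow> real) \<Rightarrow> 'h \<Rightarrow> real" where
  "form_norm E a = sqrt (E a + (norm a)\<^sup>2)"

definition nonneg_quadratic_form ::
  "(complex \<Rightarrow> 'h::real_normed_vector \<Rightarrow> 'h) \<Rightarrow> 'h set \<Rightarrow> ('h \<Rightarrow> real) \<Rightarrow> bool" where
  "nonneg_quadratic_form cm D E \<longleftrightarrow>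
     0 \<in> D \<and> (\<forall>a\<in>D. \<forall>b\<in>D. a + b \<in> D) \<and> (\<forall>c. \<forall>a\<in>D. cm c a \<in> D) \<and>
     (\<exists>q :: 'h \<Rightarrow> 'h \<Rightarrow> complex.
        (\<forall>a\<in>D. \<forall>b\<in>D. \<forall>c\<in>D. q (a + b) c = q a c + q b c \<and> q a (b + c) = q a b + q a c) \<and>
        (\<forall>z. \<forall>a\<in>D. \<forall>b\<in>D. q (cm z a) b = cnj z * q a b \<and> q a (cm z b) = z * q a b) \<and>
        (\<forall>a\<in>D. complex_of_real (E a) = q a a)) \<and>
     (\<forall>a\<in>D. 0 \<le> E a)"

definition closed_form :: "'h::real_normed_vector set \<Rightarrow> ('h \<Rightarrow> real) \<Rightarrow> bool" where
  "closed_form D E \<longleftrightarrow>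
     (\<forall>x :: nat \<Rightarrow> 'h. (\<forall>k. x k \<in> D) \<longrightarrow>
        (\<forall>e>0. \<exists>N. \<forall>k\<ge>N. \<forall>l\<ge>N. form_norm E (x k - x l) < e) \<longrightarrow>
        (\<exists>y\<in>D. (\<lambda>k. form_norm E (x k - y)) \<longlonglongrightarrow> 0))"

definition dirichlet_form ::
  "(complex \<Rightarrow> 'h::{real_inner,complete_space} \<Rightarrow> 'h) \<Rightarrow> (nat \<Rightarrow> complex mat \<Rightarrow> 'h) \<Rightarrow> ('h \<Rightarrow> 'h)
     \<Rightarrow> 'h set \<Rightarrow> ('h \<Rightarrow> real) \<Rightarrow> bool" where
  "dirichlet_form cm \<iota> J D E \<longleftrightarrow>
     nonneg_quadratic_form cm D E \<and> closed_form D E \<and> closure D = UNIV \<and>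
     (\<forall>a\<in>D. J a \<in> D \<and> E (J a) = E a) \<and>
     (\<forall>a\<in>D. J a = a \<longrightarrow> wedge1 \<iota> a \<in> D \<and> E (wedge1 \<iota> a) \<le> E a)"

end

theory Submission imports Defs begin
lemma approx_min:
  fixes K :: "nat \<Rightarrow> 'h::real_vector set" and G :: "'h \<Rightarrow> real" and H :: "'h \<Rightarrow> 'h \<Rightarrow> real"
  assumes conv: "\<And>N. convex (K N)" and ne: "\<And>N. K N \<noteq> {}"
    and mono: "\<And>N M. N \<le> M \<Longrightarrow> K M \<subseteq> K N"
    and Gnn: "\<And>x. x \<in> K 0 \<Longrightarrow> 0 \<le> G x"
    and bdd: "bdd_above (range (\<lambda>N. Inf (G ` K N)))"
    and par: "\<And>u v. u \<in> K 0 \<Longrightarrow> v \<in> K 0 \<Longrightarrow> H u v \<le> 2*G u + 2*G v - 4*G ((1/2) *\<^sub>R (u+v))"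
  shows "\<exists>z. (\<forall>N. z N \<in> K N) \<and> (\<forall>N. G (z N) < Inf (G ` K N) + 1/(real N+1)) \<and> (\<forall>e>0. \<exists>N0. \<forall>k\<ge>N0. \<forall>l\<ge>N0. H (z k) (z l) < e)"
proof -
  define s where "s N = Inf (G ` K N)" for N
  have bb: "bdd_below (G ` K N)" for N
    using mono[of 0 N] Gnn by (intro bdd_belowI[of _ 0]) auto
  have "\<exists>z. z \<in> K N \<and> G z < s N + 1/(real N+1)" for N
  proof -
    have p: "0 < 1/(real N+1)" by simp
    have "Inf (G ` K N) < Inf (G ` K N) + 1/(real N+1)" using p by linarith
    moreover have "G ` K N \<noteq> {}" using ne[of N] by simp
    ultimately obtain w where "w \<in> G ` K N" "w < Inf (G ` K N) + 1/(real N+1)"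
      using cInf_lessD by metis
    then show ?thesis unfolding s_def by auto
  qed
  then obtain z where z: "\<And>N. z N \<in> K N" "\<And>N. G (z N) < s N + 1/(real N+1)" by metis
  have slow: "s m \<le> G x" if "x \<in> K m" for m x
    unfolding s_def using bb that by (simp add: cInf_lower)
  have smono: "s N \<le> s M" if "N \<le> M" for N M
    unfolding s_def using ne[of M] bb[of N] mono[OF that]
    by (intro cInf_superset_mono) auto
  have "incseq s" using smono by (simp add: incseq_def)
  then have "s \<longlonglongrightarrow> (SUP N. s N)" using bdd unfolding s_def[abs_def]
    by (intro LIMSEQ_incseq_SUP) auto
  then have "Cauchy s" by (rule LIMSEQ_imp_Cauchy)
  have "\<exists>N0. \<forall>k\<ge>N0. \<forall>l\<ge>N0. H (z k) (z l) < e" if e: "e > 0" for e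
  proof -
    have e8: "e/8 > 0" using e by simp
    from \<open>Cauchy s\<close> obtain N1 where N1: "\<And>m n. m \<ge> N1 \<Longrightarrow> n \<ge> N1 \<Longrightarrow> dist (s m) (s n) < e/8"
      unfolding Cauchy_def using e8 by blast
    obtain N2 where N2: "1 / (real N2 + 1) < e/8"
      using nat_approx_posE[OF e8] by (metis of_nat_Suc add.commute)
    show ?thesis
    proof (intro exI[of _ "max N1 N2"] allI impI)
      fix k l assume kl: "max N1 N2 \<le> k" "max N1 N2 \<le> l"
      define m where "m = min k l"
      have km: "z k \<in> K m" "z l \<in> K m" using z(1) mono[of m k] mono[of m l] unfolding m_def by auto
      have "(1/2) *\<^sub>R (z k + z l) = (1/2) *\<^sub>R z k + (1/2) *\<^sub>R z l" by (simp add: scaleR_right_distrib)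
      also have "\<dots> \<in> K m" using conv[of m] km unfolding convex_def by auto
      finally have A: "s m \<le> G ((1/2) *\<^sub>R (z k + z l))" by (rule slow)
      have B: "H (z k) (z l) \<le> 2*G (z k) + 2*G (z l) - 4*G ((1/2) *\<^sub>R (z k + z l))"
        using par km mono[of 0 m] by auto
      have C: "1/(real k+1) \<le> 1/(real N2+1)" "1/(real l+1) \<le> 1/(real N2+1)"
        using kl by (auto simp: frac_le)
      have D: "dist (s k) (s m) < e/8" "dist (s l) (s m) < e/8"
        using N1 kl unfolding m_def by auto
      have "s k - s m < e/8" "s l - s m < e/8" using D unfolding dist_real_def by linarith+
      then show "H (z k) (z l) < e" using A B C z(2)[of k] z(2)[of l] N2 by linarith
    qed
  qed
  then show ?thesis using z unfolding s_def by blast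
qed

lemma par_law:
  fixes x y :: "'h::real_inner"
  shows "(norm (x - y))^2 + (norm (x + y))^2 = 2*(norm x)^2 + 2*(norm y)^2"
  unfolding power2_norm_eq_inner by (simp add: inner_diff_left inner_diff_right inner_add_left inner_add_right inner_commute)

lemma par_dist:
  fixes a u v :: "'h::real_inner"
  shows "(dist u v)^2 = 2*(dist a u)^2 + 2*(dist a v)^2 - 4*(dist a ((1/2) *\<^sub>R (u+v)))^2"
proof -
  have e1: "u - v = (a - v) - (a - u)" by simp
  have h: "(1/2::real) *\<^sub>R a + (1/2) *\<^sub>R a = a" by (simp flip: scaleR_add_left)
  have e2: "a - (1/2) *\<^sub>R (u+v) = (1/2) *\<^sub>R ((a - v) + (a - u))" by (simp add: algebra_simps h)
  have e3: "(norm (a - (1/2) *\<^sub>R (u+v)))^2 = (1/4) * (norm ((a - v) + (a - u)))^2"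
    unfolding e2 by (simp add: power2_eq_square)
  show ?thesis unfolding dist_norm e1 e3 using par_law[of "a - v" "a - u"]
    by (simp add: norm_minus_commute)
qed

lemma nearest_exists:
  fixes C :: "'h::{real_inner,complete_space} set"
  assumes cl: "closed C" and cv: "convex C" and ne: "C \<noteq> {}"
  shows "\<exists>b\<in>C. \<forall>c\<in>C. dist a b \<le> dist a c"
proof -
  define G where "G x = (dist a x)^2" for x
  define H where "H u v = (dist u v)^2" for u v :: 'h
  have bb: "bdd_below (G ` C)" unfolding G_def by (intro bdd_belowI[of _ 0]) auto
  obtain z where z: "\<And>N. z N \<in> C" "\<And>N. G (z N) < Inf (G ` C) + 1/(real N+1)"
    and c: "\<And>e. e>0 \<Longrightarrow> \<exists>N0. \<forall>k\<ge>N0. \<forall>l\<ge>N0. H (z k) (z l) < e"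
  proof -
    have "bdd_above (range (\<lambda>N. Inf (G ` C)))" by simp
    moreover have "H u v \<le> 2*G u + 2*G v - 4*G ((1/2) *\<^sub>R (u+v))" for u v
      unfolding G_def H_def using par_dist[of u v a] by linarith
    moreover have "0 \<le> G x" for x unfolding G_def by simp
    ultimately show ?thesis using approx_min[of "\<lambda>_. C" G H] cv ne that by blast
  qed
  have "Cauchy z"
    unfolding Cauchy_def
  proof (intro allI impI)
    fix e :: real assume "e > 0"
    then obtain N0 where N0: "\<forall>k\<ge>N0. \<forall>l\<ge>N0. H (z k) (z l) < e^2" using c by force
    show "\<exists>M. \<forall>m\<ge>M. \<forall>n\<ge>M. dist (z m) (z n) < e"
    proof (intro exI[of _ N0] allI impI)
      fix m n assume "m \<ge> N0" "n \<ge> N0"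
      then have "(dist (z m) (z n))^2 < e^2" using N0 unfolding H_def by auto
      moreover have "0 \<le> e" using \<open>e > 0\<close> by simp
      ultimately show "dist (z m) (z n) < e" by (rule power2_less_imp_less)
    qed
  qed
  then obtain y where y: "z \<longlonglongrightarrow> y" using Cauchy_convergent convergent_def by blast
  have yC: "y \<in> C" using closed_sequentially[OF cl] z(1) y by blast
  have l1: "(\<lambda>N. G (z N)) \<longlonglongrightarrow> G y" unfolding G_def
    by (intro tendsto_intros y)
  have l2: "(\<lambda>N. Inf (G ` C) + inverse (real (Suc N))) \<longlonglongrightarrow> Inf (G ` C)"
    by (rule LIMSEQ_inverse_real_of_nat_add)
  have "G y \<le> Inf (G ` C)"
  proof (rule LIMSEQ_le[OF l1 l2])
    have "G (z n) \<le> Inf (G ` C) + inverse (real (Suc n))" for n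
    proof -
      have eq: "inverse (real (Suc n)) = 1/(real n+1)" by (simp add: inverse_eq_divide add_ac)
      show ?thesis unfolding eq using z(2)[of n] by linarith
    qed
    then show "\<exists>N. \<forall>n\<ge>N. G (z n) \<le> Inf (G ` C) + inverse (real (Suc n))" by blast
  qed
  show ?thesis
  proof (intro bexI[OF _ yC] ballI)
    fix c assume "c \<in> C"
    then have "Inf (G ` C) \<le> G c" using bb by (intro cInf_lower) auto
    then have "G y \<le> G c" using \<open>G y \<le> Inf (G ` C)\<close> by linarith
    then have "(dist a y)^2 \<le> (dist a c)^2" unfolding G_def .
    then show "dist a y \<le> dist a c" by (rule power2_le_imp_le) simp
  qed
qed


lemma adj_idx:
  fixes A :: "complex mat"
  assumes "A \<in> carrier_mat m m" "i < m" "j < m"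
  shows "mat_adjoint A $$ (i,j) = cnj (A $$ (j,i))"
  using assms unfolding mat_adjoint_def by (simp add: mat_of_rows_index)

lemma diag_adj:
  fixes A :: "complex mat"
  assumes "A \<in> carrier_mat m m" "i < m"
  shows "(mat_adjoint A * A) $$ (i,i) = (\<Sum>j<m. cnj (A $$ (j,i)) * A $$ (j,i))"
  using assms adj_idx[OF assms(1) assms(2)]
  by (simp add: scalar_prod_def mat_adjoint_def atLeast0LessThan)

lemma Re_cnj_mult: "Re (cnj z * z) = (cmod z)^2"
  unfolding cmod_power2 by (simp add: power2_eq_square)

lemma L2_cm_real:
  assumes "L2_realization cm \<iota>"
  shows "cm (complex_of_real r) x = r *\<^sub>R x"
  using assms unfolding L2_realization_def complex_structure_def by simp

lemma L2_add:
  assumes "L2_realization cm \<iota>" "A \<in> carrier_mat (2^n) (2^n)" "B \<in> carrier_mat (2^n) (2^n)"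
  shows "\<iota> n (A + B) = \<iota> n A + \<iota> n B"
  using assms unfolding L2_realization_def by blast

lemma L2_smult:
  assumes "L2_realization cm \<iota>" "A \<in> carrier_mat (2^n) (2^n)"
  shows "\<iota> n (c \<cdot>\<^sub>m A) = cm c (\<iota> n A)"
  using assms unfolding L2_realization_def by blast

lemma L2_rmult:
  assumes "L2_realization cm \<iota>" "A \<in> carrier_mat (2^n) (2^n)"
  shows "\<iota> n (complex_of_real r \<cdot>\<^sub>m A) = r *\<^sub>R \<iota> n A"
  using L2_smult[OF assms] L2_cm_real[OF assms(1)] by simp

lemma L2_minus:
  assumes "L2_realization cm \<iota>" "A \<in> carrier_mat (2^n) (2^n)" "B \<in> carrier_mat (2^n) (2^n)"
  shows "\<iota> n (A - B) = \<iota> n A - \<iota> n B"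
proof -
  have "A - B = A + complex_of_real (-1) \<cdot>\<^sub>m B"
    using assms(2,3) by (intro eq_matI) auto
  moreover have "complex_of_real (-1) \<cdot>\<^sub>m B \<in> carrier_mat (2^n) (2^n)" using assms(3) by simp
  ultimately show ?thesis using L2_add[OF assms(1,2)] L2_rmult[OF assms(1,3), of "-1"] by simp
qed

lemma L2_norm:
  assumes "L2_realization cm \<iota>" "A \<in> carrier_mat (2^n) (2^n)"
  shows "norm (\<iota> n A) = sqrt (Re (ntrace n (mat_adjoint A * A)))"
  using assms unfolding L2_realization_def by blast

lemma ntrace_formula:
  assumes "A \<in> carrier_mat (2^n) (2^n)"
  shows "Re (ntrace n (mat_adjoint A * A)) = (\<Sum>i<2^n. \<Sum>j<2^n. (cmod (A $$ (j,i)))^2) / 2^n"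
proof -
  have "Re (ntrace n (mat_adjoint A * A)) = Re (\<Sum>i<2^n. (mat_adjoint A * A) $$ (i,i)) / 2^n"
    unfolding ntrace_def by (simp add: Re_divide_of_nat)
  also have "(\<Sum>i<2^n. (mat_adjoint A * A) $$ (i,i)) = (\<Sum>i<2^n. \<Sum>j<2^n. cnj (A $$ (j,i)) * A $$ (j,i))"
    using diag_adj[OF assms] by simp
  finally show ?thesis by (simp only: Re_sum Re_cnj_mult)
qed

lemma L2_norm_sq:
  assumes "L2_realization cm \<iota>" "A \<in> carrier_mat (2^n) (2^n)"
  shows "(norm (\<iota> n A))^2 = (\<Sum>i<2^n. \<Sum>j<2^n. (cmod (A $$ (j,i)))^2) / 2^n"
proof -
  have "0 \<le> (\<Sum>i<2^n. \<Sum>j<2^n. (cmod (A $$ (j,i)))^2) / (2::real)^n"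
    by (intro divide_nonneg_pos sum_nonneg) auto
  then show ?thesis unfolding L2_norm[OF assms] ntrace_formula[OF assms(2)] by simp
qed

lemma entry_bound:
  assumes "L2_realization cm \<iota>" "A \<in> carrier_mat (2^n) (2^n)" "i < 2^n" "j < 2^n"
  shows "cmod (A $$ (j,i)) \<le> sqrt (2^n) * norm (\<iota> n A)"
proof -
  have "(cmod (A $$ (j,i)))^2 \<le> (\<Sum>j<2^n. (cmod (A $$ (j,i)))^2)"
    using assms(4) by (intro member_le_sum) auto
  also have "\<dots> \<le> (\<Sum>i<2^n. \<Sum>j<2^n. (cmod (A $$ (j,i)))^2)"
    using assms(3) by (intro member_le_sum[of i "{..<2^n}" "\<lambda>i. \<Sum>j<2^n. (cmod (A $$ (j,i)))^2"] sum_nonneg) auto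
  also have "\<dots> = 2^n * (norm (\<iota> n A))^2" unfolding L2_norm_sq[OF assms(1,2)] by simp
  finally have "sqrt ((cmod (A $$ (j,i)))^2) \<le> sqrt (2^n * (norm (\<iota> n A))^2)"
    using real_sqrt_le_mono by blast
  then show ?thesis by (simp add: real_sqrt_mult)
qed

lemma S_closed:
  assumes L: "L2_realization cm \<iota>"
  shows "closed (\<iota> n ` carrier_mat (2^n) (2^n))"
  unfolding closed_sequential_limits
proof (intro allI impI, elim conjE)
  fix x l assume xS: "\<forall>k. x k \<in> \<iota> n ` carrier_mat (2^n) (2^n)" and xl: "x \<longlonglongrightarrow> l"
  obtain A where A: "\<And>k. A k \<in> carrier_mat (2^n) (2^n)" "\<And>k. x k = \<iota> n (A k)"
  proof -
    have "\<forall>k. \<exists>B. B \<in> carrier_mat (2^n) (2^n) \<and> x k = \<iota> n B" using xS by blast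
    then obtain A where "\<forall>k. A k \<in> carrier_mat (2^n) (2^n) \<and> x k = \<iota> n (A k)"
      by (rule choice[THEN exE])
    then show ?thesis using that by blast
  qed
  have cx: "Cauchy x" using xl by (rule LIMSEQ_imp_Cauchy)
  define c :: real where "c = sqrt (2^n)"
  have c0: "c > 0" unfolding c_def by simp
  have ent: "cmod (A k $$ (j,i) - A m $$ (j,i)) \<le> c * dist (x k) (x m)"
    if "i < 2^n" "j < 2^n" for i j k m
  proof -
    have "A k $$ (j,i) - A m $$ (j,i) = (A k - A m) $$ (j,i)"
      using that A(1)[of k] A(1)[of m] by simp
    moreover have "A k - A m \<in> carrier_mat (2^n) (2^n)" using A(1)[of m] by (rule minus_carrier_mat)
    ultimately have "cmod (A k $$ (j,i) - A m $$ (j,i)) \<le> c * norm (\<iota> n (A k - A m))"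
      using entry_bound[OF L _ that] unfolding c_def by metis
    also have "\<iota> n (A k - A m) = x k - x m" using L2_minus[OF L A(1) A(1)] A(2) by simp
    finally show ?thesis by (simp add: dist_norm)
  qed
  have conv: "convergent (\<lambda>k. A k $$ (j,i))" if ij: "i < 2^n" "j < 2^n" for i j
  proof -
    have "Cauchy (\<lambda>k. A k $$ (j,i))"
      unfolding Cauchy_def
    proof (intro allI impI)
      fix e :: real assume "e > 0"
      then have "e / c > 0" using c0 by simp
      then obtain M where M: "\<forall>k\<ge>M. \<forall>m\<ge>M. dist (x k) (x m) < e / c"
        using cx unfolding Cauchy_def by blast
      show "\<exists>M. \<forall>k\<ge>M. \<forall>m\<ge>M. dist (A k $$ (j,i)) (A m $$ (j,i)) < e"
      proof (intro exI[of _ M] allI impI)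
        fix k m assume "k \<ge> M" "m \<ge> M"
        then have "dist (x k) (x m) < e / c" using M by simp
        then have "c * dist (x k) (x m) < e" using c0 by (simp add: pos_less_divide_eq mult.commute)
        then show "dist (A k $$ (j,i)) (A m $$ (j,i)) < e"
          using ent[OF ij, of k m] by (simp add: dist_norm)
      qed
    qed
    then show ?thesis using Cauchy_convergent_iff by blast
  qed
  define L where "L = mat (2^n) (2^n) (\<lambda>(j,i). lim (\<lambda>k. A k $$ (j,i)))"
  have LC: "L \<in> carrier_mat (2^n) (2^n)" unfolding L_def by simp
  have Llim: "(\<lambda>k. A k $$ (j,i)) \<longlonglongrightarrow> L $$ (j,i)" if "i < 2^n" "j < 2^n" for i j
    using conv[OF that] that unfolding L_def by (simp add: convergent_LIMSEQ_iff)
  have sq: "(\<lambda>k. (norm (x k - \<iota> n L))^2) \<longlonglongrightarrow> 0"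
  proof -
    have eq: "(norm (x k - \<iota> n L))^2 = (\<Sum>i<2^n. \<Sum>j<2^n. (cmod (A k $$ (j,i) - L $$ (j,i)))^2) / 2^n" for k
    proof -
      have "x k - \<iota> n L = \<iota> n (A k - L)" using L2_minus[OF L A(1) LC] A(2) by simp
      moreover have "A k - L \<in> carrier_mat (2^n) (2^n)" using LC by (rule minus_carrier_mat)
      ultimately have "(norm (x k - \<iota> n L))^2 = (\<Sum>i<2^n. \<Sum>j<2^n. (cmod ((A k - L) $$ (j,i)))^2) / 2^n"
        using L2_norm_sq[OF L] by metis
      also have "\<dots> = (\<Sum>i<2^n. \<Sum>j<2^n. (cmod (A k $$ (j,i) - L $$ (j,i)))^2) / 2^n"
        using A(1)[of k] LC by (intro arg_cong2[where f="(/)"] sum.cong refl) auto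
      finally show ?thesis .
    qed
    have "(\<lambda>k. (\<Sum>i<2^n. \<Sum>j<2^n. (cmod (A k $$ (j,i) - L $$ (j,i)))^2) / 2^n) \<longlonglongrightarrow>
          (\<Sum>i<(2::nat)^n. \<Sum>j<(2::nat)^n. (0::real)) / 2^n"
    proof (intro tendsto_divide tendsto_sum tendsto_const)
      fix i j assume "i \<in> {..<(2::nat)^n}" "j \<in> {..<(2::nat)^n}"
      then have "(\<lambda>k. A k $$ (j,i) - L $$ (j,i)) \<longlonglongrightarrow> 0"
        using Llim[of i j] by (simp add: LIM_zero)
      then have "(\<lambda>k. cmod (A k $$ (j,i) - L $$ (j,i))) \<longlonglongrightarrow> 0"
        by (simp add: tendsto_norm_zero)
      then show "(\<lambda>k. (cmod (A k $$ (j,i) - L $$ (j,i)))^2) \<longlonglongrightarrow> 0"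
        using tendsto_power[of _ 0 _ 2] by fastforce
    qed simp
    then show ?thesis unfolding eq by simp
  qed
  have "(\<lambda>k. sqrt ((norm (x k - \<iota> n L))^2)) \<longlonglongrightarrow> sqrt 0"
    by (intro tendsto_real_sqrt sq)
  then have "(\<lambda>k. norm (x k - \<iota> n L)) \<longlonglongrightarrow> 0" by simp
  then have "x \<longlonglongrightarrow> \<iota> n L" by (simp add: tendsto_norm_zero_iff LIM_zero_iff)
  then have "l = \<iota> n L" using xl LIMSEQ_unique by blast
  then show "l \<in> \<iota> n ` carrier_mat (2^n) (2^n)" using LC by blast
qed

lemma S_add:
  assumes L: "L2_realization cm \<iota>" and "u \<in> \<iota> n ` carrier_mat (2^n) (2^n)" "v \<in> \<iota> n ` carrier_mat (2^n) (2^n)"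
  shows "u + v \<in> \<iota> n ` carrier_mat (2^n) (2^n)"
proof -
  obtain A B where AB: "A \<in> carrier_mat (2^n) (2^n)" "B \<in> carrier_mat (2^n) (2^n)" "u = \<iota> n A" "v = \<iota> n B"
    using assms(2,3) by blast
  then have "u + v = \<iota> n (A + B)" using L2_add[OF L AB(1,2)] by simp
  moreover have "A + B \<in> carrier_mat (2^n) (2^n)" using AB by simp
  ultimately show ?thesis by blast
qed

lemma S_scale:
  assumes L: "L2_realization cm \<iota>" and "u \<in> \<iota> n ` carrier_mat (2^n) (2^n)"
  shows "r *\<^sub>R u \<in> \<iota> n ` carrier_mat (2^n) (2^n)"
proof -
  obtain A where A: "A \<in> carrier_mat (2^n) (2^n)" "u = \<iota> n A"
    using assms(2) by blast
  then have "r *\<^sub>R u = \<iota> n (complex_of_real r \<cdot>\<^sub>m A)" using L2_rmult[OF L A(1)] by simp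
  moreover have "complex_of_real r \<cdot>\<^sub>m A \<in> carrier_mat (2^n) (2^n)" using A by simp
  ultimately show ?thesis by blast
qed

lemma S_convex:
  assumes L: "L2_realization cm \<iota>"
  shows "convex (\<iota> n ` carrier_mat (2^n) (2^n))"
  unfolding convex_def
proof (intro ballI allI impI)
  fix x y :: 'a and u v :: real
  assume "x \<in> \<iota> n ` carrier_mat (2^n) (2^n)" "y \<in> \<iota> n ` carrier_mat (2^n) (2^n)"
  then show "u *\<^sub>R x + v *\<^sub>R y \<in> \<iota> n ` carrier_mat (2^n) (2^n)"
    by (intro S_add[OF L] S_scale[OF L])
qed

lemma S_ne: "\<iota> n ` carrier_mat (2^n) (2^n) \<noteq> {}"
proof -
  have "0\<^sub>m (2^n) (2^n) \<in> carrier_mat (2^n) (2^n)" by simp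
  then show ?thesis by blast
qed

lemma S_Suc:
  assumes L: "L2_realization cm \<iota>"
  shows "\<iota> n ` carrier_mat (2^n) (2^n) \<subseteq> \<iota> (Suc n) ` carrier_mat (2^Suc n) (2^Suc n)"
proof
  fix u assume "u \<in> \<iota> n ` carrier_mat (2^n) (2^n)"
  then obtain A where A: "A \<in> carrier_mat (2^n) (2^n)" "u = \<iota> n A" by blast
  have "\<iota> (Suc n) (diag2 n A) = \<iota> n A" using L A(1) unfolding L2_realization_def by blast
  moreover have "diag2 n A \<in> carrier_mat (2^n + 2^n) (2^n + 2^n)"
    unfolding diag2_def using A(1) by (intro four_block_carrier_mat) auto
  moreover have "(2::nat)^n + 2^n = 2^Suc n" by simp
  ultimately show "u \<in> \<iota> (Suc n) ` carrier_mat (2^Suc n) (2^Suc n)" using A(2) by (metis image_eqI)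
qed

lemma S_mono:
  assumes L: "L2_realization cm \<iota>" and "m \<le> n"
  shows "\<iota> m ` carrier_mat (2^m) (2^m) \<subseteq> \<iota> n ` carrier_mat (2^n) (2^n)"
  using lift_Suc_mono_le[of "\<lambda>n. \<iota> n ` carrier_mat (2^n) (2^n)", OF S_Suc[OF L] assms(2)] .

lemma U_convex:
  assumes L: "L2_realization cm \<iota>"
  shows "convex (union_alg \<iota>)"
  unfolding convex_def union_alg_def
proof (intro ballI allI impI)
  fix x y :: 'a and u v :: real
  assume x: "x \<in> (\<Union>n. \<iota> n ` carrier_mat (2^n) (2^n))" and y: "y \<in> (\<Union>n. \<iota> n ` carrier_mat (2^n) (2^n))"
    and "0 \<le> u" "0 \<le> v" "u + v = 1"
  obtain m k where m: "x \<in> \<iota> m ` carrier_mat (2^m) (2^m)" and k: "y \<in> \<iota> k ` carrier_mat (2^k) (2^k)"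
    using x y by blast
  have "x \<in> \<iota> (max m k) ` carrier_mat (2^max m k) (2^max m k)" using m S_mono[OF L, of m "max m k"] by auto
  moreover have "y \<in> \<iota> (max m k) ` carrier_mat (2^max m k) (2^max m k)" using k S_mono[OF L, of k "max m k"] by auto
  ultimately have "u *\<^sub>R x + v *\<^sub>R y \<in> \<iota> (max m k) ` carrier_mat (2^max m k) (2^max m k)"
    by (intro S_add[OF L] S_scale[OF L])
  then show "u *\<^sub>R x + v *\<^sub>R y \<in> (\<Union>n. \<iota> n ` carrier_mat (2^n) (2^n))" by blast
qed

lemma Pn_props:
  fixes \<iota> :: "nat \<Rightarrow> complex mat \<Rightarrow> 'h::{real_inner,complete_space}"
  assumes L: "L2_realization cm \<iota>"
  shows "Pn \<iota> n a \<in> \<iota> n ` carrier_mat (2^n) (2^n) \<and>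
         (\<forall>c\<in>\<iota> n ` carrier_mat (2^n) (2^n). dist a (Pn \<iota> n a) \<le> dist a c)"
  unfolding Pn_def hproj_def
  by (rule someI_ex) (rule nearest_exists[OF S_closed[OF L] S_convex[OF L] S_ne, unfolded Bex_def])

lemma Pn_lim:
  fixes \<iota> :: "nat \<Rightarrow> complex mat \<Rightarrow> 'h::{real_inner,complete_space}"
  assumes L: "L2_realization cm \<iota>"
  shows "(\<lambda>n. Pn \<iota> n a) \<longlonglongrightarrow> a"
  unfolding lim_sequentially
proof (intro allI impI)
  fix e :: real assume e: "e > 0"
  have "a \<in> closure (\<Union>n. \<iota> n ` carrier_mat (2^n) (2^n))" using L unfolding L2_realization_def by simp
  then obtain u where u: "u \<in> (\<Union>n. \<iota> n ` carrier_mat (2^n) (2^n))" "dist u a < e"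
    using e closure_approachable by blast
  then obtain m where m: "u \<in> \<iota> m ` carrier_mat (2^m) (2^m)" by blast
  show "\<exists>N. \<forall>n\<ge>N. dist (Pn \<iota> n a) a < e"
  proof (intro exI[of _ m] allI impI)
    fix n assume "m \<le> n"
    then have "u \<in> \<iota> n ` carrier_mat (2^n) (2^n)" using m S_mono[OF L] by blast
    then have "dist a (Pn \<iota> n a) \<le> dist a u" using Pn_props[OF L] by blast
    then show "dist (Pn \<iota> n a) a < e" using u(2) by (simp add: dist_commute)
  qed
qed

lemma NQ_D:
  assumes L: "L2_realization cm \<iota>" and NQ: "nonneg_quadratic_form cm D E"
  shows D_add: "\<And>a b. a \<in> D \<Longrightarrow> b \<in> D \<Longrightarrow> a + b \<in> D"
    and D_scale: "\<And>a r. a \<in> D \<Longrightarrow> r *\<^sub>R a \<in> D"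
    and D_diff: "\<And>a b. a \<in> D \<Longrightarrow> b \<in> D \<Longrightarrow> a - b \<in> D"
    and E_nn: "\<And>a. a \<in> D \<Longrightarrow> 0 \<le> E a"
proof -
  have add: "\<And>a b. a \<in> D \<Longrightarrow> b \<in> D \<Longrightarrow> a + b \<in> D" using NQ unfolding nonneg_quadratic_form_def by blast
  have sc: "\<And>a r. a \<in> D \<Longrightarrow> r *\<^sub>R a \<in> D"
  proof -
    fix a r assume "a \<in> D"
    then have "cm (complex_of_real r) a \<in> D" using NQ unfolding nonneg_quadratic_form_def by blast
    then show "r *\<^sub>R a \<in> D" using L2_cm_real[OF L] by simp
  qed
  show "\<And>a b. a \<in> D \<Longrightarrow> b \<in> D \<Longrightarrow> a + b \<in> D" by (rule add)
  show "\<And>a r. a \<in> D \<Longrightarrow> r *\<^sub>R a \<in> D" by (rule sc)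
  show "\<And>a b. a \<in> D \<Longrightarrow> b \<in> D \<Longrightarrow> a - b \<in> D"
  proof -
    fix a b assume "a \<in> D" "b \<in> D"
    then have "a + (-1) *\<^sub>R b \<in> D" using add sc by blast
    then show "a - b \<in> D" by simp
  qed
  show "\<And>a. a \<in> D \<Longrightarrow> 0 \<le> E a" using NQ unfolding nonneg_quadratic_form_def by blast
qed

lemma NQ_E:
  assumes L: "L2_realization cm \<iota>" and NQ: "nonneg_quadratic_form cm D E"
  shows E_scale: "\<And>a r. a \<in> D \<Longrightarrow> E (r *\<^sub>R a) = r^2 * E a"
    and E_par: "\<And>a b. a \<in> D \<Longrightarrow> b \<in> D \<Longrightarrow> E (a + b) + E (a - b) = 2 * E a + 2 * E b"
proof -
  obtain q :: "'a \<Rightarrow> 'a \<Rightarrow> complex" where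
    qadd: "\<And>a b c. a\<in>D \<Longrightarrow> b\<in>D \<Longrightarrow> c\<in>D \<Longrightarrow> q (a + b) c = q a c + q b c \<and> q a (b + c) = q a b + q a c"
    and qsc: "\<And>z a b. a\<in>D \<Longrightarrow> b\<in>D \<Longrightarrow> q (cm z a) b = cnj z * q a b \<and> q a (cm z b) = z * q a b"
    and qE: "\<And>a. a\<in>D \<Longrightarrow> complex_of_real (E a) = q a a"
    using NQ unfolding nonneg_quadratic_form_def by metis
  have cmr: "\<And>r x. cm (complex_of_real r) x = r *\<^sub>R x" using L2_cm_real[OF L] by blast
  show "\<And>a r. a \<in> D \<Longrightarrow> E (r *\<^sub>R a) = r^2 * E a"
  proof -
    fix a r assume a: "a \<in> D"
    have ra: "r *\<^sub>R a \<in> D" using D_scale[OF L NQ a] .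
    have "complex_of_real (E (r *\<^sub>R a)) = q (cm (complex_of_real r) a) (cm (complex_of_real r) a)"
      using qE[OF ra] cmr by simp
    also have "\<dots> = cnj (complex_of_real r) * q a (cm (complex_of_real r) a)"
      using qsc[of a "cm (complex_of_real r) a" "complex_of_real r"] a ra cmr by metis
    also have "\<dots> = cnj (complex_of_real r) * (complex_of_real r * q a a)"
      using qsc[of a a "complex_of_real r"] a by metis
    also have "\<dots> = complex_of_real (r^2 * E a)" using qE[OF a] by (simp add: power2_eq_square)
    finally show "E (r *\<^sub>R a) = r^2 * E a" using of_real_eq_iff by blast
  qed
  show "\<And>a b. a \<in> D \<Longrightarrow> b \<in> D \<Longrightarrow> E (a + b) + E (a - b) = 2 * E a + 2 * E b"
  proof -
    fix a b assume a: "a \<in> D" and b: "b \<in> D"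
    define w where "w = cm (complex_of_real (-1)) b"
    have w: "w = - b" unfolding w_def cmr by simp
    have wD: "w \<in> D" unfolding w using D_scale[OF L NQ b, of "-1"] by simp
    have ab: "a + b \<in> D" using D_add[OF L NQ a b] .
    have aw: "a + w \<in> D" using D_add[OF L NQ a wD] .
    have "complex_of_real (E (a + b)) = q a a + q a b + q b a + q b b"
      using qE[OF ab] qadd[OF a b ab] qadd[OF a a b] qadd[OF b a b] by simp
    moreover have "complex_of_real (E (a + w)) = q a a + q a w + q w a + q w w"
      using qE[OF aw] qadd[OF a wD aw] qadd[OF a a wD] qadd[OF wD a wD] by simp
    moreover have "q a w = - q a b" "q w a = - q b a" "q w w = q b b"
      using qsc[OF b a] qsc[OF a b] qsc[OF b b] qsc[OF b wD] unfolding w_def by simp_all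
    moreover have "a + w = a - b" using w by simp
    ultimately have "complex_of_real (E (a + b) + E (a - b)) = complex_of_real (2 * E a + 2 * E b)"
      using qE[OF a] qE[OF b] by simp
    then show "E (a + b) + E (a - b) = 2 * E a + 2 * E b" using of_real_eq_iff by blast
  qed
qed

theorem theorem2p5:
  fixes cm :: "complex \<Rightarrow> 'h::{real_inner,complete_space} \<Rightarrow> 'h"
    and \<iota> :: "nat \<Rightarrow> complex mat \<Rightarrow> 'h"
    and J :: "'h \<Rightarrow> 'h"
    and D :: "'h set"
    and E :: "'h \<Rightarrow> real"
  assumes "L2_realization cm \<iota>"
    and "is_J \<iota> J"
    and "dirichlet_form cm \<iota> J D E"
    and "union_alg \<iota> \<subseteq> D"
    and "\<forall>a\<in>D. (\<lambda>n. E (Pn \<iota> n a)) \<longlonglongrightarrow> E a"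
  shows "\<forall>a\<in>D. \<forall>e>0. \<exists>b\<in>union_alg \<iota>. form_norm E (a - b) < e"
proof (intro ballI allI impI)
  note L = assms(1)
  have NQ: "nonneg_quadratic_form cm D E" and CF: "closed_form D E"
    using assms(3) unfolding dirichlet_form_def by auto
  note UD = assms(4)
  fix a e assume aD: "a \<in> D" and e: "(e::real) > 0"
  define F where "F w = E w + (norm w)^2" for w
  have fnF: "form_norm E w = sqrt (F w)" for w unfolding form_norm_def F_def by simp
  have Fnn: "0 \<le> F w" if "w \<in> D" for w unfolding F_def using E_nn[OF L NQ that] by simp
  have Fminus: "F (- w) = F w" if "w \<in> D" for w
    using E_scale[OF L NQ that, of "-1"] unfolding F_def by simp
  have Fpar: "F (u - v) \<le> 2*F u + 2*F v - 4*F ((1/2) *\<^sub>R (u+v))" if "u \<in> D" "v \<in> D" for u v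
  proof -
    have uv: "u + v \<in> D" using D_add[OF L NQ that] .
    have eq1: "E ((1/2) *\<^sub>R (u+v)) = (1/4) * E (u + v)" using E_scale[OF L NQ uv, of "1/2"]
      by (simp add: power2_eq_square)
    have eq2: "(norm ((1/2) *\<^sub>R (u+v)))^2 = (1/4) * (norm (u+v))^2"
      by (simp add: power2_eq_square)
    have eq3: "E (u + v) + E (u - v) = 2 * E u + 2 * E v" using E_par[OF L NQ that] .
    have eq4: "(norm (u - v))^2 + (norm (u + v))^2 = 2*(norm u)^2 + 2*(norm v)^2" by (rule par_law)
    have eq5: "4 * (1/4 * E (u + v) + 1/4 * (norm (u + v))^2) = E (u + v) + (norm (u + v))^2" by simp
    show ?thesis unfolding F_def eq1 eq2 eq5 using eq3 eq4 by (smt (verit))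
  qed
  define x where "x n = Pn \<iota> n a" for n
  have xU: "x n \<in> union_alg \<iota>" for n
    using Pn_props[OF L, of n a] unfolding x_def union_alg_def by blast
  have xlim: "x \<longlonglongrightarrow> a" unfolding x_def using Pn_lim[OF L] .
  have Flim: "(\<lambda>n. F (x n)) \<longlonglongrightarrow> F a"
    unfolding F_def x_def using assms(5) aD xlim unfolding x_def
    by (intro tendsto_intros) auto
  obtain B where B: "\<And>n. norm (F (x n)) \<le> B"
    using Cauchy_Bseq[OF LIMSEQ_imp_Cauchy[OF Flim]] unfolding Bseq_def by blast
  define K where "K N = convex hull (x ` {N..})" for N
  have KU: "K N \<subseteq> union_alg \<iota>" for N
    unfolding K_def using xU U_convex[OF L] by (intro hull_minimal) auto
  have KD: "K N \<subseteq> D" for N using KU UD by blast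
  have Kconv: "convex (K N)" for N unfolding K_def by (rule convex_convex_hull)
  have xK: "x N \<in> K N" for N unfolding K_def by (intro hull_inc) auto
  have Kne: "K N \<noteq> {}" for N using xK by blast
  have Kmono: "K M \<subseteq> K N" if "N \<le> M" for N M
    unfolding K_def using that by (intro hull_mono image_mono) auto
  have bddF: "bdd_above (range (\<lambda>N. Inf (F ` K N)))"
  proof (rule bdd_aboveI[of _ B], clarify)
    fix N
    have "bdd_below (F ` K N)" using Fnn KD by (intro bdd_belowI[of _ 0]) auto
    then have "Inf (F ` K N) \<le> F (x N)" using xK by (intro cInf_lower) auto
    then show "Inf (F ` K N) \<le> B" using B[of N] by simp
  qed
  obtain z where zK: "\<And>N. z N \<in> K N"
    and zc: "\<And>e. e > 0 \<Longrightarrow> \<exists>N0. \<forall>k\<ge>N0. \<forall>l\<ge>N0. F (z k - z l) < e"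
  proof -
    have "\<exists>z. (\<forall>N. z N \<in> K N) \<and> (\<forall>N. F (z N) < Inf (F ` K N) + 1/(real N+1)) \<and>
      (\<forall>e>0. \<exists>N0. \<forall>k\<ge>N0. \<forall>l\<ge>N0. F (z k - z l) < e)"
    proof (rule approx_min[of K F "\<lambda>u v. F (u - v)"])
      show "\<And>N. convex (K N)" by (rule Kconv)
      show "\<And>N. K N \<noteq> {}" by (rule Kne)
      show "\<And>N M. N \<le> M \<Longrightarrow> K M \<subseteq> K N" by (rule Kmono)
      show "\<And>w. w \<in> K 0 \<Longrightarrow> 0 \<le> F w" using Fnn KD by blast
      show "bdd_above (range (\<lambda>N. Inf (F ` K N)))" by (rule bddF)
      show "\<And>u v. u \<in> K 0 \<Longrightarrow> v \<in> K 0 \<Longrightarrow> F (u - v) \<le> 2*F u + 2*F v - 4*F ((1/2) *\<^sub>R (u+v))"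
        using Fpar KD by blast
    qed
    then show ?thesis using that by blast
  qed
  have zD: "z k \<in> D" for k using zK KD by blast
  have "\<exists>y\<in>D. (\<lambda>k. form_norm E (z k - y)) \<longlonglongrightarrow> 0"
  proof (rule CF[unfolded closed_form_def, rule_format])
    show "\<And>k. z k \<in> D" by (rule zD)
    fix e :: real assume "e > 0"
    then obtain N0 where N0: "\<forall>k\<ge>N0. \<forall>l\<ge>N0. F (z k - z l) < e^2" using zc[of "e^2"] by auto
    show "\<exists>N. \<forall>k\<ge>N. \<forall>l\<ge>N. form_norm E (z k - z l) < e"
    proof (intro exI[of _ N0] allI impI)
      fix k l assume "k \<ge> N0" "l \<ge> N0"
      then have "F (z k - z l) < e^2" using N0 by blast
      then have "sqrt (F (z k - z l)) < sqrt (e^2)" by (rule real_sqrt_less_mono)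
      then show "form_norm E (z k - z l) < e" unfolding fnF using \<open>e > 0\<close> by simp
    qed
  qed
  then obtain y where yD: "y \<in> D" and zy: "(\<lambda>k. form_norm E (z k - y)) \<longlonglongrightarrow> 0" by blast
  have "(\<lambda>k. z k - y) \<longlonglongrightarrow> 0"
  proof (rule Lim_null_comparison[OF _ zy])
    show "\<forall>\<^sub>F k in sequentially. norm (z k - y) \<le> form_norm E (z k - y)"
    proof (intro always_eventually allI)
      fix k
      have "0 \<le> E (z k - y)" using E_nn[OF L NQ D_diff[OF L NQ zD yD]] .
      then have "sqrt ((norm (z k - y))^2) \<le> sqrt (F (z k - y))" unfolding F_def
        by (intro real_sqrt_le_mono) simp
      then show "norm (z k - y) \<le> form_norm E (z k - y)" unfolding fnF by simp
    qed
  qed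
  then have zy': "z \<longlonglongrightarrow> y" by (simp add: LIM_zero_iff)
  have za: "z \<longlonglongrightarrow> a"
    unfolding lim_sequentially
  proof (intro allI impI)
    fix r :: real assume "r > 0"
    then have "r/2 > 0" by simp
    then obtain N1 where N1: "\<forall>n\<ge>N1. dist (x n) a < r/2" using xlim unfolding lim_sequentially by blast
    show "\<exists>N. \<forall>n\<ge>N. dist (z n) a < r"
    proof (intro exI[of _ N1] allI impI)
      fix n assume "n \<ge> N1"
      have "x ` {n..} \<subseteq> cball a (r/2)"
      proof (intro image_subsetI)
        fix m assume "m \<in> {n..}"
        then have "dist (x m) a < r/2" using N1 \<open>n \<ge> N1\<close> by auto
        then show "x m \<in> cball a (r/2)" by (simp add: dist_commute)
      qed
      then have "K n \<subseteq> cball a (r/2)" unfolding K_def by (intro hull_minimal convex_cball)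
      then have "dist a (z n) \<le> r/2" using zK[of n] by auto
      then show "dist (z n) a < r" using \<open>r > 0\<close> by (simp add: dist_commute)
    qed
  qed
  have "y = a" using LIMSEQ_unique[OF zy' za] .
  then obtain k where k: "form_norm E (z k - a) < e"
    using zy e unfolding lim_sequentially by (metis dist_0_norm order_refl real_norm_def abs_less_iff dist_real_def
      diff_0_right)
  have "form_norm E (a - z k) = form_norm E (z k - a)"
    unfolding fnF using Fminus[OF D_diff[OF L NQ zD aD, of k]] by simp
  moreover have "z k \<in> union_alg \<iota>" using zK[of k] KU[of k] by blast
  ultimately show "\<exists>b\<in>union_alg \<iota>. form_norm E (a - b) < e" using k by (intro bexI[of _ "z k"]) simp_all
qed

end
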